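(* Fix a point and suppose the Jacobian $J\in\mathbb{R}^{D\times q}$ satisfies $J\sim\mathcal{N}(\mathbb{E}[J],I_D\otimes\Sigma)$ with $\Sigma$ symmetric positive definite; let $G=J^{\top}J$. Then for every $v\in\mathbb{R}^q\setminus\{0\}$, \[0\;\le\;\frac{\|v\|_R-\|v\|_F}{\|v\|_R}\;\le\;\frac{1}{D+\omega}+\frac{\omega}{(D+\omega)^2},\qquad \omega=\frac{v^{\top}\mathbb{E}[J]^{\top}\mathbb{E}[J]v}{v^{\top}\Sigma v}.\]
   Context: $J\sim\mathcal{N}(\mathbb{E}[J],I_D\otimes\Sigma)$: rows of $J$ independent, $k$-th row Gaussian with mean the $k$-th row of $\mathbb{E}[J]$ and covariance $\Sigma\in\mathbb{R}^{q\times q}$. $\|v\|_F=\mathbb{E}[\sqrt{v^{\top}Gv}]$, $\|v\|_R=\sqrt{v^{\top}\mathbb{E}[G]v}$. *)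

theory Defs
  imports "HOL-Probability.Probability"
begin

definition mvn_density :: "real^'q \<Rightarrow> real^'q^'q \<Rightarrow> real^'q \<Rightarrow> real" where
  "mvn_density m S x =
     exp (- (1/2) * ((x - m) \<bullet> (matrix_inv S *v (x - m)))) / sqrt ((2 * pi) ^ CARD('q) * det S)"

definition sym_pos_def_mat :: "real^'q^'q \<Rightarrow> bool" where
  "sym_pos_def_mat S \<longleftrightarrow> transpose S = S \<and> (\<forall>x. x \<noteq> 0 \<longrightarrow> x \<bullet> (S *v x) > 0)"

definition gram :: "real^'q^'d \<Rightarrow> real^'q^'q" where
  "gram A = transpose A ** A"

definition normF :: "'w measure \<Rightarrow> ('w \<Rightarrow> real^'q^'d) \<Rightarrow> real^'q \<Rightarrow> real" where
  "normF M J v = (\<integral>\<omega>. sqrt (v \<bullet> (gram (J \<omega>) *v v)) \<partial>M)"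

definition normR :: "'w measure \<Rightarrow> ('w \<Rightarrow> real^'q^'d) \<Rightarrow> real^'q \<Rightarrow> real" where
  "normR M J v = sqrt (v \<bullet> ((\<chi> i j. (\<integral>\<omega>. gram (J \<omega>) $ i $ j \<partial>M)) *v v))"

end

theory Submission
  imports Defs
begin


lemma abs_exp_sub1: "\<bar>exp x - 1\<bar> \<le> \<bar>x\<bar> * exp \<bar>x\<bar>" for x :: real
proof (cases "x \<ge> 0")
  case True
  have "1 - x \<le> exp (-x)" using exp_ge_add_one_self[of "-x"] by simp
  hence "(1 - x) * exp x \<le> exp (-x) * exp x" by (simp add: mult_right_mono)
  hence "exp x - x * exp x \<le> 1" by (simp add: algebra_simps exp_minus_inverse)
  moreover have "exp x \<ge> 1" using True by simp
  ultimately show ?thesis using True by simp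
next
  case False
  have "1 + x \<le> exp x" by simp
  moreover have "exp x \<le> 1" using False by simp
  moreover have "exp \<bar>x\<bar> \<ge> 1" by simp
  ultimately have "\<bar>exp x - 1\<bar> \<le> \<bar>x\<bar>" using False by linarith
  also have "\<dots> \<le> \<bar>x\<bar> * exp \<bar>x\<bar>" using \<open>exp \<bar>x\<bar> \<ge> 1\<close>
    by (simp add: mult_le_cancel_left1)
  finally show ?thesis .
qed

lemma pow_le_fact_exp: "\<bar>y\<bar> ^ n \<le> fact n * exp \<bar>y\<bar>" for y :: real
proof -
  have s: "(\<lambda>n. \<bar>y\<bar>^n /\<^sub>R fact n) sums exp \<bar>y\<bar>" by (rule exp_converges)
  have "(\<Sum>i\<in>{n}. \<bar>y\<bar>^i /\<^sub>R fact i) \<le> suminf (\<lambda>n. \<bar>y\<bar>^n /\<^sub>R fact n)"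
    by (rule sum_le_suminf) (use s in \<open>auto simp: sums_iff\<close>)
  hence "\<bar>y\<bar>^n / fact n \<le> exp \<bar>y\<bar>" using s by (simp add: sums_iff divide_inverse_commute)
  thus ?thesis by (simp add: divide_le_eq mult.commute)
qed

lemma exp_abs_le: "exp (a * \<bar>y\<bar>) \<le> exp (a * y) + exp (- a * y)" for a y :: real
  by (cases "y \<ge> 0") (auto simp: add_increasing add_increasing2)

lemma (in prob_space) int_pow_exp:
  fixes Y :: "'a \<Rightarrow> real"
  assumes Y[measurable]: "Y \<in> borel_measurable M"
    and E: "\<And>s. integrable M (\<lambda>\<omega>. exp (s * Y \<omega>))"
    and c: "c \<ge> 0"
  shows "integrable M (\<lambda>\<omega>. \<bar>Y \<omega>\<bar>^n * exp (c * \<bar>Y \<omega>\<bar>) * exp (s * Y \<omega>))"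
proof -
  have 1: "integrable M (\<lambda>\<omega>. fact n * (exp ((s + (c+1)) * Y \<omega>) + exp ((s - (c+1)) * Y \<omega>)))"
    using E by (intro integrable_mult_right integrable_add) auto
  have 2: "(\<lambda>\<omega>. \<bar>Y \<omega>\<bar>^n * exp (c * \<bar>Y \<omega>\<bar>) * exp (s * Y \<omega>)) \<in> borel_measurable M" by measurable
  have 3: "AE \<omega> in M. norm (\<bar>Y \<omega>\<bar>^n * exp (c * \<bar>Y \<omega>\<bar>) * exp (s * Y \<omega>))
      \<le> norm (fact n * (exp ((s + (c+1)) * Y \<omega>) + exp ((s - (c+1)) * Y \<omega>)))"
  proof (intro AE_I2)
    fix \<omega> let ?y = "Y \<omega>"
    have "\<bar>?y\<bar>^n * exp (c * \<bar>?y\<bar>) * exp (s * ?y) \<le> fact n * exp \<bar>?y\<bar> * exp (c * \<bar>?y\<bar>) * exp (s * ?y)"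
      by (intro mult_right_mono pow_le_fact_exp) auto
    also have "\<dots> = fact n * (exp ((c+1) * \<bar>?y\<bar>) * exp (s * ?y))"
      by (simp add: algebra_simps exp_add[symmetric])
    also have "\<dots> \<le> fact n * ((exp ((c+1) * ?y) + exp (- (c+1) * ?y)) * exp (s * ?y))"
      by (intro mult_left_mono mult_right_mono exp_abs_le) auto
    also have "\<dots> = fact n * (exp ((s + (c+1)) * ?y) + exp ((s - (c+1)) * ?y))"
      by (simp add: algebra_simps exp_add[symmetric])
    finally show "norm (\<bar>?y\<bar>^n * exp (c * \<bar>?y\<bar>) * exp (s * ?y))
      \<le> norm (fact n * (exp ((s + (c+1)) * ?y) + exp ((s - (c+1)) * ?y)))"
      by (simp add: abs_mult)
  qed
  show ?thesis by (rule Bochner_Integration.integrable_bound[OF 1 2 3])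
qed

lemma (in prob_space) int_pow_exp':
  fixes Y :: "'a \<Rightarrow> real"
  assumes Y[measurable]: "Y \<in> borel_measurable M"
    and E: "\<And>s. integrable M (\<lambda>\<omega>. exp (s * Y \<omega>))"
  shows "integrable M (\<lambda>\<omega>. Y \<omega>^n * exp (s * Y \<omega>))"
proof -
  have 1: "integrable M (\<lambda>\<omega>. \<bar>Y \<omega>\<bar>^n * exp (0 * \<bar>Y \<omega>\<bar>) * exp (s * Y \<omega>))"
    by (rule int_pow_exp[OF Y E]) simp
  have 2: "(\<lambda>\<omega>. Y \<omega>^n * exp (s * Y \<omega>)) \<in> borel_measurable M" by measurable
  have 3: "AE \<omega> in M. norm (Y \<omega>^n * exp (s * Y \<omega>)) \<le> norm (\<bar>Y \<omega>\<bar>^n * exp (0 * \<bar>Y \<omega>\<bar>) * exp (s * Y \<omega>))"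
    by (simp add: abs_mult power_abs)
  show ?thesis by (rule Bochner_Integration.integrable_bound[OF 1 2 3])
qed

lemma seq_exp_quot:
  fixes X :: "nat \<Rightarrow> real"
  assumes X0: "\<And>i. X i \<noteq> 0" and lim: "X \<longlonglongrightarrow> 0"
  shows "(\<lambda>i. (exp (X i * y) - 1) / X i) \<longlonglongrightarrow> y"
proof -
  have "((\<lambda>h. exp (h * y)) has_real_derivative exp (0 * y) * y) (at 0)"
    by (auto intro!: derivative_eq_intros)
  hence "((\<lambda>h. (exp ((0 + h) * y) - exp (0 * y)) / h) \<longlongrightarrow> y) (at 0)"
    unfolding DERIV_def by simp
  hence "((\<lambda>h. (exp (h * y) - 1) / h) \<longlongrightarrow> y) (at 0)" by simp
  thus ?thesis unfolding tendsto_at_iff_sequentially comp_def using X0 lim by auto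
qed

lemma (in prob_space) deriv_mom:
  fixes Y :: "'a \<Rightarrow> real"
  assumes Y[measurable]: "Y \<in> borel_measurable M"
    and E: "\<And>s. integrable M (\<lambda>\<omega>. exp (s * Y \<omega>))"
  shows "((\<lambda>s. \<integral>\<omega>. Y \<omega> ^ n * exp (s * Y \<omega>) \<partial>M) has_real_derivative
          (\<integral>\<omega>. Y \<omega> ^ Suc n * exp (s * Y \<omega>) \<partial>M)) (at s)"
proof -
  define \<psi> where "\<psi> = (\<lambda>s. \<integral>\<omega>. Y \<omega> ^ n * exp (s * Y \<omega>) \<partial>M)"
  define D where "D = (\<integral>\<omega>. Y \<omega> ^ Suc n * exp (s * Y \<omega>) \<partial>M)"
  have "((\<lambda>h. (\<psi> (s + h) - \<psi> s) / h) \<longlongrightarrow> D) (at 0)"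
    unfolding tendsto_at_iff_sequentially
  proof (intro allI impI)
    fix X :: "nat \<Rightarrow> real" assume X0': "\<forall>i. X i \<in> UNIV - {0}" and lim: "X \<longlonglongrightarrow> 0"
    have X0: "\<And>i. X i \<noteq> 0" using X0' by auto
    obtain B where B: "B > 0" "\<And>i. norm (X i) \<le> B"
      using convergent_imp_Bseq[of X] lim unfolding Bseq_def convergent_def by blast
    define f where "f i \<omega> = Y \<omega> ^ n * ((exp ((s + X i) * Y \<omega>) - exp (s * Y \<omega>)) / X i)" for i \<omega>
    have eq: "(\<psi> (s + X i) - \<psi> s) / X i = (\<integral>\<omega>. f i \<omega> \<partial>M)" for i
    proof -
      have "(\<integral>\<omega>. f i \<omega> \<partial>M) = (\<integral>\<omega>. (Y \<omega> ^ n * exp ((s + X i) * Y \<omega>) - Y \<omega> ^ n * exp (s * Y \<omega>)) / X i \<partial>M)"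
        unfolding f_def by (simp add: algebra_simps diff_divide_distrib)
      also have "\<dots> = (\<integral>\<omega>. (Y \<omega> ^ n * exp ((s + X i) * Y \<omega>) - Y \<omega> ^ n * exp (s * Y \<omega>)) \<partial>M) / X i"
        by (rule integral_divide_zero)
      also have "\<dots> = (\<psi> (s + X i) - \<psi> s) / X i"
        unfolding \<psi>_def using int_pow_exp'[OF Y E, of n "s + X i"] int_pow_exp'[OF Y E, of n s] by (simp add: Bochner_Integration.integral_diff)
      finally show ?thesis by simp
    qed
    have w: "integrable M (\<lambda>\<omega>. \<bar>Y \<omega>\<bar>^Suc n * exp (B * \<bar>Y \<omega>\<bar>) * exp (s * Y \<omega>))"
      by (rule int_pow_exp[OF Y E]) (use B in simp)
    have "(\<lambda>i. integral\<^sup>L M (f i)) \<longlonglongrightarrow> integral\<^sup>L M (\<lambda>\<omega>. Y \<omega> ^ Suc n * exp (s * Y \<omega>))"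
    proof (rule integral_dominated_convergence[OF _ _ w])
      show "(\<lambda>\<omega>. Y \<omega> ^ Suc n * exp (s * Y \<omega>)) \<in> borel_measurable M" by measurable
      show "\<And>i. f i \<in> borel_measurable M" unfolding f_def by measurable
      show "AE \<omega> in M. (\<lambda>i. f i \<omega>) \<longlonglongrightarrow> Y \<omega> ^ Suc n * exp (s * Y \<omega>)"
      proof (intro AE_I2)
        fix \<omega>
        have fe: "f i \<omega> = Y \<omega> ^ n * exp (s * Y \<omega>) * ((exp (X i * Y \<omega>) - 1) / X i)" for i
          unfolding f_def by (simp add: algebra_simps exp_add diff_divide_distrib)
        have "(\<lambda>i. Y \<omega> ^ n * exp (s * Y \<omega>) * ((exp (X i * Y \<omega>) - 1) / X i))
              \<longlonglongrightarrow> Y \<omega> ^ n * exp (s * Y \<omega>) * Y \<omega>"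
          by (intro tendsto_mult_left seq_exp_quot X0 lim)
        thus "(\<lambda>i. f i \<omega>) \<longlonglongrightarrow> Y \<omega> ^ Suc n * exp (s * Y \<omega>)"
          unfolding fe by (simp add: algebra_simps)
      qed
      show "\<And>i. AE \<omega> in M. norm (f i \<omega>) \<le> \<bar>Y \<omega>\<bar>^Suc n * exp (B * \<bar>Y \<omega>\<bar>) * exp (s * Y \<omega>)"
      proof (intro AE_I2)
        fix i \<omega>
        let ?y = "Y \<omega>"
        have fe: "f i \<omega> = ?y ^ n * exp (s * ?y) * ((exp (X i * ?y) - 1) / X i)"
          unfolding f_def by (simp add: algebra_simps exp_add diff_divide_distrib)
        have q: "\<bar>(exp (X i * ?y) - 1) / X i\<bar> \<le> \<bar>?y\<bar> * exp (B * \<bar>?y\<bar>)"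
        proof -
          have "\<bar>exp (X i * ?y) - 1\<bar> \<le> \<bar>X i * ?y\<bar> * exp \<bar>X i * ?y\<bar>" by (rule abs_exp_sub1)
          also have "\<dots> \<le> \<bar>X i * ?y\<bar> * exp (B * \<bar>?y\<bar>)"
            using B(2)[of i] by (intro mult_left_mono) (auto simp: abs_mult mult_right_mono)
          finally have "\<bar>exp (X i * ?y) - 1\<bar> \<le> \<bar>X i\<bar> * (\<bar>?y\<bar> * exp (B * \<bar>?y\<bar>))"
            by (simp add: abs_mult mult.assoc)
          thus ?thesis using X0[of i] by (simp add: divide_le_eq mult.commute abs_divide)
        qed
        have "norm (f i \<omega>) = \<bar>?y\<bar> ^ n * exp (s * ?y) * \<bar>(exp (X i * ?y) - 1) / X i\<bar>"
          unfolding fe by (simp add: abs_mult power_abs)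
        also have "\<dots> \<le> \<bar>?y\<bar> ^ n * exp (s * ?y) * (\<bar>?y\<bar> * exp (B * \<bar>?y\<bar>))"
          by (intro mult_left_mono q) auto
        also have "\<dots> = \<bar>?y\<bar>^Suc n * exp (B * \<bar>?y\<bar>) * exp (s * ?y)" by (simp add: algebra_simps)
        finally show "norm (f i \<omega>) \<le> \<bar>?y\<bar>^Suc n * exp (B * \<bar>?y\<bar>) * exp (s * ?y)" .
      qed
    qed
    thus "((\<lambda>h. (\<psi> (s + h) - \<psi> s) / h) \<circ> X) \<longlonglongrightarrow> D"
      unfolding comp_def eq D_def .
  qed
  thus ?thesis unfolding DERIV_def \<psi>_def D_def .
qed



lemma (in prob_space) gauss_moments:
  fixes Y :: "'a \<Rightarrow> real"
  assumes Y[measurable]: "Y \<in> borel_measurable M"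
    and E: "\<And>s. integrable M (\<lambda>\<omega>. exp (s * Y \<omega>))"
    and mgf: "\<And>s. (\<integral>\<omega>. exp (s * Y \<omega>) \<partial>M) = exp (s * \<mu> + s^2 * \<sigma>2 / 2)"
  shows "(\<integral>\<omega>. Y \<omega> ^ 2 \<partial>M) = \<mu>^2 + \<sigma>2"
    and "(\<integral>\<omega>. Y \<omega> ^ 4 \<partial>M) = \<mu>^4 + 6 * \<mu>^2 * \<sigma>2 + 3 * \<sigma>2^2"
    and "integrable M (\<lambda>\<omega>. Y \<omega> ^ n)"
proof -
  define \<psi> where "\<psi> n s = (\<integral>\<omega>. Y \<omega> ^ n * exp (s * Y \<omega>) \<partial>M)" for n s
  have d: "(\<psi> n has_real_derivative \<psi> (Suc n) s) (at s)" for n s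
    unfolding \<psi>_def by (rule deriv_mom[OF Y E])
  have step: "\<psi> (Suc n) = g'" if "\<psi> n = g" "\<And>s. (g has_real_derivative g' s) (at s)" for n g g'
  proof (rule ext)
    fix s
    have "(\<psi> n has_real_derivative g' s) (at s)" using that by simp
    thus "\<psi> (Suc n) s = g' s" using DERIV_unique[OF d[of n s]] by blast
  qed
  define e where "e s = exp (s * \<mu> + s^2 * \<sigma>2 / 2)" for s
  have de: "(e has_real_derivative (\<mu> + s * \<sigma>2) * e s) (at s)" for s
    unfolding e_def by (auto intro!: derivative_eq_intros simp: power2_eq_square algebra_simps)
  have p0: "\<psi> 0 = e" unfolding \<psi>_def e_def by (simp add: mgf)
  have p1: "\<psi> 1 = (\<lambda>s. (\<mu> + s * \<sigma>2) * e s)"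
    using step[OF p0 de] by (simp only: One_nat_def)
  have p2: "\<psi> 2 = (\<lambda>s. (\<sigma>2 + (\<mu> + s * \<sigma>2)^2) * e s)"
  proof -
    have "((\<lambda>s. (\<mu> + s * \<sigma>2) * e s) has_real_derivative (\<sigma>2 + (\<mu> + s * \<sigma>2)^2) * e s) (at s)" for s
      by (auto intro!: derivative_eq_intros de simp: power2_eq_square algebra_simps)
    from step[OF p1 this] show ?thesis by (simp only: numeral_2_eq_2 One_nat_def)
  qed
  have p3: "\<psi> 3 = (\<lambda>s. (3 * \<sigma>2 * (\<mu> + s * \<sigma>2) + (\<mu> + s * \<sigma>2)^3) * e s)"
  proof -
    have "((\<lambda>s. (\<sigma>2 + (\<mu> + s * \<sigma>2)^2) * e s) has_real_derivative
        (3 * \<sigma>2 * (\<mu> + s * \<sigma>2) + (\<mu> + s * \<sigma>2)^3) * e s) (at s)" for s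
      by (auto intro!: derivative_eq_intros de simp: power2_eq_square power3_eq_cube algebra_simps)
    from step[OF p2 this] show ?thesis by simp
  qed
  have p4: "\<psi> 4 = (\<lambda>s. (3 * \<sigma>2^2 + 6 * \<sigma>2 * (\<mu> + s * \<sigma>2)^2 + (\<mu> + s * \<sigma>2)^4) * e s)"
  proof -
    have "((\<lambda>s. (3 * \<sigma>2 * (\<mu> + s * \<sigma>2) + (\<mu> + s * \<sigma>2)^3) * e s) has_real_derivative
        (3 * \<sigma>2^2 + 6 * \<sigma>2 * (\<mu> + s * \<sigma>2)^2 + (\<mu> + s * \<sigma>2)^4) * e s) (at s)" for s
      by (auto intro!: derivative_eq_intros de simp: power2_eq_square power3_eq_cube power4_eq_xxxx algebra_simps)
    from step[OF p3 this] show ?thesis by simp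
  qed
  have "\<psi> 2 0 = \<mu>^2 + \<sigma>2" using p2 by (simp add: e_def)
  thus "(\<integral>\<omega>. Y \<omega> ^ 2 \<partial>M) = \<mu>^2 + \<sigma>2" by (simp add: \<psi>_def)
  have "\<psi> 4 0 = \<mu>^4 + 6 * \<mu>^2 * \<sigma>2 + 3 * \<sigma>2^2" using p4 by (simp add: e_def algebra_simps)
  thus "(\<integral>\<omega>. Y \<omega> ^ 4 \<partial>M) = \<mu>^4 + 6 * \<mu>^2 * \<sigma>2 + 3 * \<sigma>2^2" by (simp add: \<psi>_def)
  show "integrable M (\<lambda>\<omega>. Y \<omega> ^ n)" using int_pow_exp'[OF Y E, of n 0] by simp
qed




lemma spd_inv:
  fixes S :: "real^'q^'q"
  assumes "sym_pos_def_mat S"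
  shows "S ** matrix_inv S = mat 1" "matrix_inv S ** S = mat 1"
proof -
  have inj: "inj ((*v) S)"
  proof (rule injI)
    fix x y assume "S *v x = S *v y"
    hence "S *v (x - y) = 0" by (simp add: matrix_vector_mult_diff_distrib)
    hence "(x - y) \<bullet> (S *v (x - y)) = 0" by simp
    hence "\<not> (x - y \<noteq> 0)" using assms unfolding sym_pos_def_mat_def by (metis less_irrefl)
    thus "x = y" by simp
  qed
  hence "invertible S" using invertible_left_inverse matrix_left_invertible_injective by blast
  hence "\<exists>A'. S ** A' = mat 1 \<and> A' ** S = mat 1" unfolding invertible_def .
  hence "S ** matrix_inv S = mat 1 \<and> matrix_inv S ** S = mat 1"
    unfolding matrix_inv_def by (rule someI_ex)
  thus "S ** matrix_inv S = mat 1" "matrix_inv S ** S = mat 1" by auto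
qed

lemma mvn_tilt:
  fixes S :: "real^'q^'q"
  assumes S: "sym_pos_def_mat S"
  shows "mvn_density m S x * exp (u \<bullet> x)
       = mvn_density (m + S *v u) S x * exp (u \<bullet> m + u \<bullet> (S *v u) / 2)"
proof -
  define P where "P = matrix_inv S"
  define w where "w = S *v u"
  define y where "y = x - m"
  have tS: "transpose S = S" using S unfolding sym_pos_def_mat_def by simp
  have SP: "S ** P = mat 1" "P ** S = mat 1" using spd_inv[OF S] unfolding P_def by auto
  have f1: "w \<bullet> (P *v z) = u \<bullet> z" for z
  proof -
    have "w = u v* S" unfolding w_def by (metis tS transpose_matrix_vector)
    hence "w \<bullet> (P *v z) = u \<bullet> (S *v (P *v z))" by (simp add: dot_lmul_matrix)
    also have "\<dots> = u \<bullet> z" by (simp add: matrix_vector_mul_assoc SP)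
    finally show ?thesis .
  qed
  have f2: "z \<bullet> (P *v w) = z \<bullet> u" for z
    unfolding w_def by (simp add: matrix_vector_mul_assoc SP)
  have Q: "(y - w) \<bullet> (P *v (y - w)) = y \<bullet> (P *v y) - 2 * (u \<bullet> y) + u \<bullet> w"
    by (simp add: matrix_vector_mult_diff_distrib inner_diff_left inner_diff_right f1 f2 inner_commute)
  have xe: "x - (m + w) = y - w" unfolding y_def by simp
  have "u \<bullet> x = u \<bullet> y + u \<bullet> m" unfolding y_def by (simp add: inner_diff_right)
  hence ex: "- (1/2) * (y \<bullet> (P *v y)) + u \<bullet> x = - (1/2) * ((y - w) \<bullet> (P *v (y - w))) + (u \<bullet> m + u \<bullet> w / 2)"
    unfolding Q by (simp add: algebra_simps)
  show ?thesis
    unfolding mvn_density_def P_def[symmetric] w_def[symmetric] xe y_def[symmetric]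
    apply (simp add: exp_add[symmetric])
    apply (rule disjI2)
    using ex by (simp add: algebra_simps add_divide_distrib diff_divide_distrib)
qed

lemma mvn_shift: "mvn_density (m + t) S x = mvn_density m S (x - t)"
  unfolding mvn_density_def by (simp add: algebra_simps)

lemma (in prob_space) mvn_mgf:
  fixes X :: "'a \<Rightarrow> real^'q" and S :: "real^'q^'q"
  assumes S: "sym_pos_def_mat S"
    and D: "distributed M lborel X (\<lambda>x. ennreal (mvn_density m S x))"
  shows "integrable M (\<lambda>\<omega>. exp (u \<bullet> X \<omega>))"
    and "(\<integral>\<omega>. exp (u \<bullet> X \<omega>) \<partial>M) = exp (u \<bullet> m + u \<bullet> (S *v u) / 2)"
proof -
  have Xm[measurable]: "X \<in> borel_measurable M" using distributed_measurable[OF D] by simp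
  have fm[measurable]: "(\<lambda>x. ennreal (mvn_density m S x)) \<in> borel_measurable borel"
    using distributed_borel_measurable[OF D] by simp
  have I1: "(\<integral>\<^sup>+ x. ennreal (mvn_density m S x) \<partial>lborel) = 1"
    using distributed_nn_integral[OF D, of "\<lambda>_. 1"] by (simp add: emeasure_space_1)
  have shift: "(\<integral>\<^sup>+ x. ennreal (mvn_density (m + t) S x) \<partial>lborel) = 1" for t
  proof -
    have "(\<integral>\<^sup>+ x. ennreal (mvn_density (m + t) S x) \<partial>lborel)
        = (\<integral>\<^sup>+ x. ennreal (mvn_density m S ((-t) + x)) \<partial>lborel)"
      by (simp add: mvn_shift)
    also have "\<dots> = (\<integral>\<^sup>+ x. ennreal (mvn_density m S x) \<partial>distr lborel borel ((+) (-t)))"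
      by (subst nn_integral_distr) auto
    also have "\<dots> = 1" using I1 by (simp add: lborel_distr_plus)
    finally show ?thesis .
  qed
  define c where "c = u \<bullet> m + u \<bullet> (S *v u) / 2"
  have fm2[measurable]: "(\<lambda>x. ennreal (mvn_density (m + S *v u) S x)) \<in> borel_measurable borel"
    unfolding mvn_shift by measurable
  have "(\<integral>\<^sup>+ \<omega>. ennreal (exp (u \<bullet> X \<omega>)) \<partial>M)
      = (\<integral>\<^sup>+ x. ennreal (mvn_density m S x) * ennreal (exp (u \<bullet> x)) \<partial>lborel)"
    by (rule distributed_nn_integral[OF D, symmetric]) auto
  also have "\<dots> = (\<integral>\<^sup>+ x. ennreal (mvn_density (m + S *v u) S x) * ennreal (exp c) \<partial>lborel)"
    by (intro nn_integral_cong)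
      (simp add: ennreal_mult''[symmetric] mvn_tilt[OF S] c_def)
  also have "\<dots> = ennreal (exp c)"
    by (subst nn_integral_multc) (auto simp: shift)
  finally have nn: "(\<integral>\<^sup>+ \<omega>. ennreal (exp (u \<bullet> X \<omega>)) \<partial>M) = ennreal (exp c)" .
  show "integrable M (\<lambda>\<omega>. exp (u \<bullet> X \<omega>))"
    by (rule integrableI_nn_integral_finite[OF _ _ nn]) auto
  show "(\<integral>\<omega>. exp (u \<bullet> X \<omega>) \<partial>M) = exp (u \<bullet> m + u \<bullet> (S *v u) / 2)"
    by (subst integral_eq_nn_integral) (auto simp: nn c_def)
qed

lemma (in prob_space) mvn_moments:
  fixes X :: "'a \<Rightarrow> real^'q" and S :: "real^'q^'q"
  assumes S: "sym_pos_def_mat S"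
    and D: "distributed M lborel X (\<lambda>x. ennreal (mvn_density m S x))"
  shows "(\<integral>\<omega>. (X \<omega> \<bullet> u) ^ 2 \<partial>M) = (m \<bullet> u)^2 + u \<bullet> (S *v u)"
    and "(\<integral>\<omega>. (X \<omega> \<bullet> u) ^ 4 \<partial>M) = (m \<bullet> u)^4 + 6 * (m \<bullet> u)^2 * (u \<bullet> (S *v u)) + 3 * (u \<bullet> (S *v u))^2"
    and "integrable M (\<lambda>\<omega>. (X \<omega> \<bullet> u) ^ n)"
proof -
  have Xm[measurable]: "X \<in> borel_measurable M" using distributed_measurable[OF D] by simp
  have Ym: "(\<lambda>\<omega>. X \<omega> \<bullet> u) \<in> borel_measurable M" by measurable
  have e: "s * (X \<omega> \<bullet> u) = (s *\<^sub>R u) \<bullet> X \<omega>" for s \<omega> by (simp add: inner_commute)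
  have Sv: "S *v (s *\<^sub>R u) = s *\<^sub>R (S *v u)" for s
    by (simp add: vec_eq_iff matrix_vector_mult_def sum_distrib_left algebra_simps)
  have E: "integrable M (\<lambda>\<omega>. exp (s * (X \<omega> \<bullet> u)))" for s
    unfolding e by (rule mvn_mgf(1)[OF S D])
  have mgf: "(\<integral>\<omega>. exp (s * (X \<omega> \<bullet> u)) \<partial>M) = exp (s * (m \<bullet> u) + s^2 * (u \<bullet> (S *v u)) / 2)" for s
    unfolding e mvn_mgf(2)[OF S D] Sv by (simp add: inner_commute power2_eq_square algebra_simps)
  note G = gauss_moments[OF Ym E mgf]
  show "(\<integral>\<omega>. (X \<omega> \<bullet> u) ^ 2 \<partial>M) = (m \<bullet> u)^2 + u \<bullet> (S *v u)" by (rule G(1))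
  show "(\<integral>\<omega>. (X \<omega> \<bullet> u) ^ 4 \<partial>M) = (m \<bullet> u)^4 + 6 * (m \<bullet> u)^2 * (u \<bullet> (S *v u)) + 3 * (u \<bullet> (S *v u))^2" by (rule G(2))
  show "integrable M (\<lambda>\<omega>. (X \<omega> \<bullet> u) ^ n)" by (rule G(3))
qed




lemma gram_quad:
  fixes A :: "real^'q^'d" and v :: "real^'q"
  shows "v \<bullet> (gram A *v v) = (\<Sum>k\<in>UNIV. (A $ k \<bullet> v)^2)"
proof -
  have "v \<bullet> (gram A *v v) = v \<bullet> (transpose A *v (A *v v))"
    by (simp add: gram_def matrix_vector_mul_assoc)
  also have "\<dots> = (A *v v) \<bullet> (A *v v)"
    by (metis dot_lmul_matrix inner_commute transpose_matrix_vector)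
  also have "\<dots> = (\<Sum>k\<in>UNIV. (A $ k \<bullet> v)^2)"
    by (simp add: inner_vec_def matrix_vector_mult_def power2_eq_square)
  finally show ?thesis .
qed

lemma gram_entry:
  fixes A :: "real^'q^'d"
  shows "gram A $ i $ j = (\<Sum>k\<in>UNIV. A $ k $ i * A $ k $ j)"
  by (simp add: gram_def matrix_matrix_mult_def transpose_def)

lemma quad_expand:
  fixes B :: "real^'q^'q" and v :: "real^'q"
  shows "v \<bullet> (B *v v) = (\<Sum>i\<in>UNIV. \<Sum>j\<in>UNIV. v $ i * v $ j * B $ i $ j)"
  by (simp add: inner_vec_def matrix_vector_mult_def sum_distrib_left algebra_simps)

lemma sqrt_upper:
  fixes a x :: real
  assumes "a > 0" "x \<ge> 0"
  shows "sqrt x \<le> sqrt a + (x - a) / (2 * sqrt a)"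
proof -
  define s where "s = sqrt x"
  define t where "t = sqrt a"
  have t: "t > 0" using assms unfolding t_def by simp
  have "s \<le> t + (s^2 - t^2) / (2 * t)"
  proof -
    have "0 \<le> (s - t)^2" by simp
    hence "2 * t * s \<le> 2 * t * t + (s^2 - t^2)" by (simp add: power2_eq_square algebra_simps)
    thus ?thesis using t by (simp add: field_simps)
  qed
  moreover have e1: "sqrt x ^ 2 = x" and e2: "sqrt a ^ 2 = a" using assms by simp_all
  ultimately show ?thesis unfolding s_def t_def e1 e2 by blast
qed

lemma sqrt_lower:
  fixes a x :: real
  assumes "a > 0" "x \<ge> 0"
  shows "sqrt a + (x - a) / (2 * sqrt a) - (x - a)^2 / (2 * a * sqrt a) \<le> sqrt x"
proof -
  define s where "s = sqrt x"
  define t where "t = sqrt a"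
  have t: "t > 0" using assms unfolding t_def by simp
  have s: "s \<ge> 0" using assms unfolding s_def by simp
  have "t + (s^2 - t^2) / (2 * t) - (s^2 - t^2)^2 / (2 * t^2 * t) \<le> s"
  proof -
    have id: "2 * t^3 * s - (2 * t^4 + t^2 * (s^2 - t^2) - (s^2 - t^2)^2) = (s - t)^2 * (s * (s + 2 * t))"
      by (simp add: power2_eq_square power3_eq_cube power4_eq_xxxx algebra_simps)
    have "0 \<le> (s - t)^2 * (s * (s + 2 * t))" using s t by simp
    hence "2 * t^4 + t^2 * (s^2 - t^2) - (s^2 - t^2)^2 \<le> 2 * t^3 * s" using id by linarith
    moreover have "t + (s^2 - t^2) / (2 * t) - (s^2 - t^2)^2 / (2 * t^2 * t)
        = (2 * t^4 + t^2 * (s^2 - t^2) - (s^2 - t^2)^2) / (2 * t^3)"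
      using t by (simp add: field_simps power2_eq_square power3_eq_cube power4_eq_xxxx)
    moreover have "0 < 2 * t^3" using t by simp
    ultimately show ?thesis by (simp add: pos_divide_le_eq mult.commute)
  qed
  moreover have e1: "sqrt x ^ 2 = x" and e2: "sqrt a ^ 2 = a" using assms by simp_all
  ultimately show ?thesis unfolding s_def t_def e1 e2 by blast
qed




theorem mainTheorem10:
  fixes M :: "'w measure"
    and J :: "'w \<Rightarrow> real^'q^'d"
    and EJ :: "real^'q^'d"
    and \<Sigma> :: "real^'q^'q"
    and v :: "real^'q"
  assumes "prob_space M"
    and "sym_pos_def_mat \<Sigma>"
    and "prob_space.indep_vars M (\<lambda>_. borel) (\<lambda>k \<omega>. J \<omega> $ k) UNIV"
    and "\<And>k. distributed M lborel (\<lambda>\<omega>. J \<omega> $ k) (\<lambda>x. ennreal (mvn_density (EJ $ k) \<Sigma> x))"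
    and "v \<noteq> 0"
  defines "\<omega>' \<equiv> (v \<bullet> ((transpose EJ ** EJ) *v v)) / (v \<bullet> (\<Sigma> *v v))"
    and "D \<equiv> real CARD('d)"
  shows "0 \<le> (normR M J v - normF M J v) / normR M J v
       \<and> (normR M J v - normF M J v) / normR M J v \<le> 1 / (D + \<omega>') + \<omega>' / (D + \<omega>')^2"
proof -
  interpret prob_space M by (rule assms(1))
  have S: "sym_pos_def_mat \<Sigma>" by (rule assms(2))
  note Dk = assms(4)
  define Y where "Y k \<omega> = J \<omega> $ k \<bullet> v" for k \<omega>
  define \<mu> where "\<mu> k = EJ $ k \<bullet> v" for k
  define \<sigma>2 where "\<sigma>2 = v \<bullet> (\<Sigma> *v v)"
  have \<sigma>pos: "\<sigma>2 > 0" using S assms(5) unfolding sym_pos_def_mat_def \<sigma>2_def by auto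
  have Jm[measurable]: "(\<lambda>\<omega>. J \<omega> $ k) \<in> borel_measurable M" for k
    using distributed_measurable[OF Dk[of k]] by simp
  have Ym[measurable]: "(\<lambda>\<omega>. Y k \<omega>) \<in> borel_measurable M" for k unfolding Y_def by measurable
  have m2: "(\<integral>\<omega>. Y k \<omega> ^ 2 \<partial>M) = \<mu> k ^ 2 + \<sigma>2" for k
    unfolding Y_def \<mu>_def \<sigma>2_def by (rule mvn_moments(1)[OF S Dk])
  have m4: "(\<integral>\<omega>. Y k \<omega> ^ 4 \<partial>M) = \<mu> k ^ 4 + 6 * \<mu> k ^ 2 * \<sigma>2 + 3 * \<sigma>2 ^ 2" for k
    unfolding Y_def \<mu>_def \<sigma>2_def by (rule mvn_moments(2)[OF S Dk])
  have iY: "integrable M (\<lambda>\<omega>. Y k \<omega> ^ n)" for k n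
    unfolding Y_def by (rule mvn_moments(3)[OF S Dk])
  define X where "X \<omega> = (\<Sum>k\<in>UNIV. Y k \<omega> ^ 2)" for \<omega>
  have Xm[measurable]: "X \<in> borel_measurable M" unfolding X_def by measurable
  have Xnn: "X \<omega> \<ge> 0" for \<omega> unfolding X_def by (simp add: sum_nonneg)
  have Xv: "v \<bullet> (gram (J \<omega>) *v v) = X \<omega>" for \<omega> unfolding X_def Y_def by (rule gram_quad)
  have F: "normF M J v = (\<integral>\<omega>. sqrt (X \<omega>) \<partial>M)" unfolding normF_def Xv ..
  have iX: "integrable M X" unfolding X_def using iY by (intro Bochner_Integration.integrable_sum) auto
  have EX: "(\<integral>\<omega>. X \<omega> \<partial>M) = (\<Sum>k\<in>UNIV. \<mu> k ^ 2 + \<sigma>2)"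
    unfolding X_def by (subst Bochner_Integration.integral_sum) (auto simp: iY m2)
  have ind: "integrable M (\<lambda>\<omega>. Y k \<omega> ^ 2 * Y l \<omega> ^ 2) \<and>
      (\<integral>\<omega>. Y k \<omega> ^ 2 * Y l \<omega> ^ 2 \<partial>M) = (\<integral>\<omega>. Y k \<omega> ^ 2 \<partial>M) * (\<integral>\<omega>. Y l \<omega> ^ 2 \<partial>M)"
    if kl: "k \<noteq> l" for k l
  proof -
    have "indep_vars (\<lambda>_. borel) (\<lambda>i \<omega>. (\<lambda>x. (x \<bullet> v) ^ 2) (J \<omega> $ i)) {k, l}"
      by (rule indep_vars_compose2[OF indep_vars_subset[OF assms(3)]]) auto
    hence I: "indep_vars (\<lambda>_. borel) (\<lambda>i \<omega>. Y i \<omega> ^ 2) {k, l}" unfolding Y_def by simp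
    have "integrable M (\<lambda>\<omega>. \<Prod>i\<in>{k,l}. Y i \<omega> ^ 2)"
      by (rule indep_vars_integrable[OF _ I]) (auto simp: iY)
    moreover have "(\<integral>\<omega>. (\<Prod>i\<in>{k,l}. Y i \<omega> ^ 2) \<partial>M) = (\<Prod>i\<in>{k,l}. \<integral>\<omega>. Y i \<omega> ^ 2 \<partial>M)"
      by (rule indep_vars_lebesgue_integral[OF _ I]) (auto simp: iY)
    ultimately show ?thesis using kl by simp
  qed
  define a where "a = (\<integral>\<omega>. X \<omega> \<partial>M)"
  define c where "c k = \<mu> k ^ 4 + 6 * \<mu> k ^ 2 * \<sigma>2 + 3 * \<sigma>2 ^ 2" for k
  define b where "b k = \<mu> k ^ 2 + \<sigma>2" for k
  have X2: "X \<omega> ^ 2 = (\<Sum>k\<in>UNIV. \<Sum>l\<in>UNIV. Y k \<omega> ^ 2 * Y l \<omega> ^ 2)" for \<omega>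
    unfolding X_def power2_eq_square[of "sum _ _"] by (simp add: sum_product)
  have iterm: "integrable M (\<lambda>\<omega>. Y k \<omega> ^ 2 * Y l \<omega> ^ 2)" for k l
  proof (cases "k = l")
    case True
    have "(\<lambda>\<omega>. Y k \<omega> ^ 2 * Y l \<omega> ^ 2) = (\<lambda>\<omega>. Y k \<omega> ^ 4)" using True by (simp add: power_add[symmetric])
    thus ?thesis using iY by simp
  qed (use ind in blast)
  have eterm: "(\<integral>\<omega>. Y k \<omega> ^ 2 * Y l \<omega> ^ 2 \<partial>M) = (if k = l then c k else b k * b l)" for k l
  proof (cases "k = l")
    case True
    have "(\<lambda>\<omega>. Y k \<omega> ^ 2 * Y l \<omega> ^ 2) = (\<lambda>\<omega>. Y k \<omega> ^ 4)" using True by (simp add: power_add[symmetric])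
    thus ?thesis using True m4 by (simp add: c_def)
  next
    case False
    thus ?thesis using ind[OF False] m2 by (simp add: b_def)
  qed
  have iX2: "integrable M (\<lambda>\<omega>. X \<omega> ^ 2)"
    unfolding X2 using iterm by (intro Bochner_Integration.integrable_sum) auto
  have EX2: "(\<integral>\<omega>. X \<omega> ^ 2 \<partial>M) = (\<Sum>k\<in>UNIV. \<Sum>l\<in>UNIV. if k = l then c k else b k * b l)"
    unfolding X2 using iterm
    by (subst Bochner_Integration.integral_sum, force, subst Bochner_Integration.integral_sum, force)
       (simp add: eterm)
  have a_eq: "a = (\<Sum>k\<in>UNIV. b k)" unfolding a_def EX b_def ..
  have V: "(\<integral>\<omega>. X \<omega> ^ 2 \<partial>M) - a ^ 2 = (\<Sum>k\<in>UNIV. 4 * \<mu> k ^ 2 * \<sigma>2 + 2 * \<sigma>2 ^ 2)"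
  proof -
    have "(\<integral>\<omega>. X \<omega> ^ 2 \<partial>M) - a ^ 2
        = (\<Sum>k\<in>UNIV. \<Sum>l\<in>UNIV. (if k = l then c k else b k * b l) - b k * b l)"
      unfolding EX2 a_eq by (simp add: power2_eq_square sum_product sum_subtractf)
    also have "\<dots> = (\<Sum>k\<in>UNIV. \<Sum>l\<in>UNIV. if k = l then c k - b k * b k else 0)"
      by (intro sum.cong refl) auto
    also have "\<dots> = (\<Sum>k\<in>UNIV. c k - b k * b k)" by simp
    also have "\<dots> = (\<Sum>k\<in>UNIV. 4 * \<mu> k ^ 2 * \<sigma>2 + 2 * \<sigma>2 ^ 2)"
      by (intro sum.cong refl) (simp add: c_def b_def power2_eq_square power4_eq_xxxx algebra_simps)
    finally show ?thesis .
  qed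
  have iG: "integrable M (\<lambda>\<omega>. gram (J \<omega>) $ i $ j)" for i j
  proof -
    have e: "J \<omega> $ k $ i * J \<omega> $ k $ j = ((J \<omega> $ k \<bullet> (axis i 1 + axis j 1))^2 - (J \<omega> $ k \<bullet> (axis i 1 - axis j 1))^2) / 4" for \<omega> k
      by (simp add: inner_add_right inner_diff_right inner_axis power2_eq_square algebra_simps)
    show ?thesis unfolding gram_entry e
      by (intro Bochner_Integration.integrable_sum integrable_divide_zero Bochner_Integration.integrable_diff mvn_moments(3)[OF S Dk])
  qed
  have R: "normR M J v = sqrt a"
  proof -
    have "v \<bullet> ((\<chi> i j. \<integral>\<omega>. gram (J \<omega>) $ i $ j \<partial>M) *v v) = (\<Sum>i\<in>UNIV. \<Sum>j\<in>UNIV. v$i * v$j * (\<integral>\<omega>. gram (J \<omega>) $ i $ j \<partial>M))"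
      by (simp add: quad_expand)
    also have "\<dots> = (\<integral>\<omega>. (\<Sum>i\<in>UNIV. \<Sum>j\<in>UNIV. v$i * v$j * gram (J \<omega>) $ i $ j) \<partial>M)"
      using iG by (subst Bochner_Integration.integral_sum, force, subst Bochner_Integration.integral_sum, force) simp
    also have "\<dots> = a" unfolding a_def quad_expand[symmetric] Xv ..
    finally show ?thesis unfolding normR_def by simp
  qed
  define L where "L = (\<Sum>k\<in>UNIV. \<mu> k ^ 2)"
  have Ssum: "v \<bullet> ((transpose EJ ** EJ) *v v) = L"
    using gram_quad[of v EJ] unfolding gram_def \<mu>_def L_def .
  have om: "\<omega>' = L / \<sigma>2" unfolding \<omega>'_def Ssum \<sigma>2_def ..
  have Lnn: "L \<ge> 0" unfolding L_def by (simp add: sum_nonneg)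
  have Dpos: "D > 0" unfolding D_def by simp
  have omnn: "\<omega>' \<ge> 0" unfolding om using Lnn \<sigma>pos by simp
  have aeq: "a = \<sigma>2 * (D + \<omega>')"
  proof -
    have "a = L + D * \<sigma>2" unfolding a_eq b_def L_def D_def by (simp add: sum.distrib)
    thus ?thesis unfolding om using \<sigma>pos by (simp add: field_simps)
  qed
  have Veq: "(\<integral>\<omega>. X \<omega> ^ 2 \<partial>M) - a ^ 2 = 2 * \<sigma>2^2 * (D + 2 * \<omega>')"
  proof -
    have "(\<integral>\<omega>. X \<omega> ^ 2 \<partial>M) - a ^ 2 = 4 * \<sigma>2 * L + 2 * D * \<sigma>2^2"
      unfolding V L_def D_def by (simp add: sum.distrib sum_distrib_left sum_distrib_right algebra_simps)
    thus ?thesis unfolding om using \<sigma>pos by (simp add: field_simps power2_eq_square)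
  qed
  have apos: "a > 0" unfolding aeq using \<sigma>pos Dpos omnn by simp
  have sa: "sqrt a > 0" using apos by simp
  have isq: "integrable M (\<lambda>\<omega>. sqrt (X \<omega>))"
  proof (rule Bochner_Integration.integrable_bound[where f="\<lambda>\<omega>. 1 + X \<omega>"])
    show "integrable M (\<lambda>\<omega>. 1 + X \<omega>)" using iX by simp
    show "(\<lambda>\<omega>. sqrt (X \<omega>)) \<in> borel_measurable M" by measurable
    show "AE \<omega> in M. norm (sqrt (X \<omega>)) \<le> norm (1 + X \<omega>)"
    proof (intro AE_I2)
      fix \<omega>
      have "sqrt (X \<omega>) \<le> 1 + X \<omega>"
      proof -
        have "1 + (X \<omega> - 1) / 2 \<le> 1 + X \<omega>" using Xnn[of \<omega>] by (simp add: field_simps)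
        moreover have "sqrt (X \<omega>) \<le> 1 + (X \<omega> - 1) / 2" using sqrt_upper[of 1 "X \<omega>"] Xnn[of \<omega>] by simp
        ultimately show ?thesis by linarith
      qed
      thus "norm (sqrt (X \<omega>)) \<le> norm (1 + X \<omega>)" using Xnn[of \<omega>] by simp
    qed
  qed
  have up: "(\<integral>\<omega>. sqrt (X \<omega>) \<partial>M) \<le> sqrt a"
  proof -
    have "(\<integral>\<omega>. sqrt (X \<omega>) \<partial>M) \<le> (\<integral>\<omega>. sqrt a + (X \<omega> - a) / (2 * sqrt a) \<partial>M)"
      using isq iX apos Xnn by (intro integral_mono sqrt_upper) auto
    also have "\<dots> = sqrt a + ((\<integral>\<omega>. X \<omega> \<partial>M) - a) / (2 * sqrt a)"
      using iX by (simp add: Bochner_Integration.integral_add Bochner_Integration.integral_diff prob_space)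
    also have "\<dots> = sqrt a" unfolding a_def by simp
    finally show ?thesis .
  qed
  have low: "sqrt a - ((\<integral>\<omega>. X \<omega> ^ 2 \<partial>M) - a ^ 2) / (2 * a * sqrt a) \<le> (\<integral>\<omega>. sqrt (X \<omega>) \<partial>M)"
  proof -
    have "(\<integral>\<omega>. sqrt a + (X \<omega> - a) / (2 * sqrt a) - (X \<omega> ^ 2 - 2 * a * X \<omega> + a ^ 2) / (2 * a * sqrt a) \<partial>M)
        \<le> (\<integral>\<omega>. sqrt (X \<omega>) \<partial>M)"
    proof (intro integral_mono)
      show "integrable M (\<lambda>\<omega>. sqrt a + (X \<omega> - a) / (2 * sqrt a) - (X \<omega> ^ 2 - 2 * a * X \<omega> + a ^ 2) / (2 * a * sqrt a))"
        using iX iX2 by simp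
      show "integrable M (\<lambda>\<omega>. sqrt (X \<omega>))" by (rule isq)
      fix \<omega>
      have "(X \<omega> ^ 2 - 2 * a * X \<omega> + a ^ 2) = (X \<omega> - a)^2" by (simp add: power2_diff)
      thus "sqrt a + (X \<omega> - a) / (2 * sqrt a) - (X \<omega> ^ 2 - 2 * a * X \<omega> + a ^ 2) / (2 * a * sqrt a) \<le> sqrt (X \<omega>)"
        using sqrt_lower[OF apos Xnn[of \<omega>]] by simp
    qed
    moreover have "(\<integral>\<omega>. sqrt a + (X \<omega> - a) / (2 * sqrt a) - (X \<omega> ^ 2 - 2 * a * X \<omega> + a ^ 2) / (2 * a * sqrt a) \<partial>M)
        = sqrt a + ((\<integral>\<omega>. X \<omega> \<partial>M) - a) / (2 * sqrt a) - ((\<integral>\<omega>. X \<omega> ^ 2 \<partial>M) - 2 * a * (\<integral>\<omega>. X \<omega> \<partial>M) + a ^ 2) / (2 * a * sqrt a)"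
      using iX iX2 by (simp add: Bochner_Integration.integral_add Bochner_Integration.integral_diff prob_space)
    ultimately show ?thesis unfolding a_def[symmetric] by (simp add: power2_eq_square)
  qed
  define Fv where "Fv = (\<integral>\<omega>. sqrt (X \<omega>) \<partial>M)"
  define V where "V = (\<integral>\<omega>. X \<omega> ^ 2 \<partial>M) - a ^ 2"
  have "0 \<le> (sqrt a - Fv) / sqrt a" using up sa unfolding Fv_def by simp
  moreover have "(sqrt a - Fv) / sqrt a \<le> V / (2 * a^2)"
  proof -
    have "sqrt a - Fv \<le> V / (2 * a * sqrt a)" using low unfolding Fv_def V_def by simp
    hence "(sqrt a - Fv) / sqrt a \<le> V / (2 * a * sqrt a) / sqrt a" using sa by (rule divide_right_mono[OF _ less_imp_le])
    also have "\<dots> = V / (2 * a^2)" using apos by (simp add: power2_eq_square)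
    finally show ?thesis .
  qed
  moreover have "V / (2 * a^2) = 1 / (D + \<omega>') + \<omega>' / (D + \<omega>')^2"
  proof -
    have p: "D + \<omega>' > 0" using Dpos omnn by simp
    have V2: "V = 2 * \<sigma>2^2 * (D + 2 * \<omega>')" unfolding V_def by (rule Veq)
    have e1: "V / (2 * a^2) = (D + 2 * \<omega>') / (D + \<omega>')^2"
      unfolding V2 aeq using p \<sigma>pos by (simp add: power_mult_distrib)
    have e2: "1 / (D + \<omega>') + \<omega>' / (D + \<omega>')^2 = (D + 2 * \<omega>') / (D + \<omega>')^2"
    proof -
      have g: "1 / t + w / t^2 = (t + w) / t^2" if "t > 0" for t w :: real
        using that by (simp add: field_simps power2_eq_square)
      show ?thesis using g[OF p, of \<omega>'] by (simp add: algebra_simps)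
    qed
    show ?thesis unfolding e1 e2 ..
  qed
  ultimately show ?thesis unfolding F R Fv_def[symmetric] by simp
qed

end
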